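(* Let $\mathsf{L}_1,\mathsf{L}_2$ be finite connected undirected graphs (possibly with tails), where $\mathsf{L}_j$ has $t_j\in\{1,2\}$ marked (ramified) vertices. Let $1\le g\le \min(t_1,t_2)$ and let $\mathsf{L}$ be a $g$-gluing of $\mathsf{L}_1$ and $\mathsf{L}_2$, and assume that $\mathsf{L}$ has $t=t_1+t_2-g$ marked vertices with $1\le t\le 2$. Then $F_t(\mathsf{L})=F_{t_1}(\mathsf{L}_1)F_{t_2}(\mathsf{L}_2)$.
   Context: Denote the marked vertices of $\mathsf{L}_j$ by $v_i(\mathsf{L}_j)$, $1\le i\le t_j$. A $g$-gluing $\mathsf{L}$ of $\mathsf{L}_1$ and $\mathsf{L}_2$ is the graph with edge set $E(\mathsf{L}_1)\sqcup E(\mathsf{L}_2)$ and vertex set $\mathbf{V}(\mathsf{L}_1)\sqcup\mathbf{V}(\mathsf{L}_2)$ modulo the identification $v_1(\mathsf{L}_1)=v_1(\mathsf{L}_2)$ if $g=1$, and modulo $v_i(\mathsf{L}_1)=v_i(\mathsf{L}_2)$ for $i=1,2$ if $g=2$; the marked vertices of $\mathsf{L}$ are the images of the marked vertices of $\mathsf{L}_1,\mathsf{L}_2$. For a finite connected graph $\mathsf{S}$ with $t\in\{1,2\}$ marked vertices, a segmental $t$-tree spanning forest is a decomposition of $\mathsf{S}$ into $t$ trees (a spanning forest with $t$ components) each containing exactly one marked vertex; $F_t(\mathsf{S})$ denotes their number. In particular $F_1(\mathsf{S})$ is the number of spanning trees of $\mathsf{S}$. *)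

theory Defs
  imports Main
begin

text \<open>A finite (multi)graph is given by a finite vertex set V, a finite edge set E and
an endpoint map: each edge has one (loop) or two endpoints in V.
Marked vertices are given as a list of distinct vertices.\<close>

definition fin_graph :: "'v set \<Rightarrow> 'e set \<Rightarrow> ('e \<Rightarrow> 'v set) \<Rightarrow> bool" where
  "fin_graph V E ends \<longleftrightarrow> finite V \<and> finite E \<and>
     (\<forall>e\<in>E. ends e \<subseteq> V \<and> 1 \<le> card (ends e) \<and> card (ends e) \<le> 2)"

definition adj :: "('e \<Rightarrow> 'v set) \<Rightarrow> 'e set \<Rightarrow> 'v \<Rightarrow> 'v \<Rightarrow> bool" where
  "adj ends F x y \<longleftrightarrow> (\<exists>e\<in>F. ends e = {x, y})"

definition reach :: "('e \<Rightarrow> 'v set) \<Rightarrow> 'e set \<Rightarrow> 'v \<Rightarrow> 'v \<Rightarrow> bool" where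
  "reach ends F = (adj ends F)\<^sup>*\<^sup>*"

definition connected_graph :: "'v set \<Rightarrow> 'e set \<Rightarrow> ('e \<Rightarrow> 'v set) \<Rightarrow> bool" where
  "connected_graph V E ends \<longleftrightarrow> (\<forall>x\<in>V. \<forall>y\<in>V. reach ends E x y)"

text \<open>An edge set is a forest iff it contains no cycle: no edge (in particular no loop)
has its endpoints connected by the remaining edges.\<close>
definition forest :: "('e \<Rightarrow> 'v set) \<Rightarrow> 'e set \<Rightarrow> bool" where
  "forest ends F \<longleftrightarrow> (\<forall>e\<in>F. \<forall>x y. ends e = {x, y} \<longrightarrow> \<not> reach ends (F - {e}) x y)"

text \<open>Segmental spanning forest: a spanning forest each of whose components contains
exactly one marked vertex (so it has exactly t = length ms components).\<close>
definition segmental_forest ::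
  "'v set \<Rightarrow> 'e set \<Rightarrow> ('e \<Rightarrow> 'v set) \<Rightarrow> 'v list \<Rightarrow> 'e set \<Rightarrow> bool" where
  "segmental_forest V E ends ms F \<longleftrightarrow> F \<subseteq> E \<and> forest ends F \<and>
     (\<forall>x\<in>V. \<exists>!m. m \<in> set ms \<and> reach ends F x m)"

definition F_count :: "'v set \<Rightarrow> 'e set \<Rightarrow> ('e \<Rightarrow> 'v set) \<Rightarrow> 'v list \<Rightarrow> nat" where
  "F_count V E ends ms = card {F. segmental_forest V E ends ms F}"

text \<open>g-gluing: the i-th marked vertex of L2 is identified with the i-th marked vertex
of L1, for i \<le> g.\<close>
definition glue_map :: "nat \<Rightarrow> 'a list \<Rightarrow> 'b list \<Rightarrow> 'b \<Rightarrow> 'a + 'b" where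
  "glue_map g ms1 ms2 v =
     (if 1 \<le> g \<and> v = ms2 ! 0 then Inl (ms1 ! 0)
      else if 2 \<le> g \<and> v = ms2 ! 1 then Inl (ms1 ! 1) else Inr v)"

definition glue_V :: "nat \<Rightarrow> 'a set \<Rightarrow> 'a list \<Rightarrow> 'b set \<Rightarrow> 'b list \<Rightarrow> ('a + 'b) set" where
  "glue_V g V1 ms1 V2 ms2 = Inl ` V1 \<union> glue_map g ms1 ms2 ` V2"

definition glue_E :: "'c set \<Rightarrow> 'd set \<Rightarrow> ('c + 'd) set" where
  "glue_E E1 E2 = Inl ` E1 \<union> Inr ` E2"

definition glue_ends :: "nat \<Rightarrow> ('c \<Rightarrow> 'a set) \<Rightarrow> 'a list \<Rightarrow> ('d \<Rightarrow> 'b set) \<Rightarrow> 'b list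
    \<Rightarrow> ('c + 'd) \<Rightarrow> ('a + 'b) set" where
  "glue_ends g ends1 ms1 ends2 ms2 e =
     (case e of Inl e1 \<Rightarrow> Inl ` ends1 e1 | Inr e2 \<Rightarrow> glue_map g ms1 ms2 ` ends2 e2)"

definition glue_ms :: "nat \<Rightarrow> 'a list \<Rightarrow> 'b list \<Rightarrow> ('a + 'b) list" where
  "glue_ms g ms1 ms2 = remdups (map Inl ms1 @ map (glue_map g ms1 ms2) ms2)"

end

theory Submission
  imports Defs
begin


lemma reach_refl: "reach ends F x x" by (simp add: reach_def)

lemma reach_step: "reach ends F x y \<Longrightarrow> adj ends F y z \<Longrightarrow> reach ends F x z"
  unfolding reach_def by (rule rtranclp.rtrancl_into_rtrancl)

lemma seg_uniq:
  assumes "segmental_forest V E ends ms F" "x \<in> V" "a \<in> set ms" "b \<in> set ms"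
    "reach ends F x a" "reach ends F x b"
  shows "a = b"
  using assms unfolding segmental_forest_def by blast

lemma img_pair:
  assumes "inj f" "f ` A = {u, w}"
  shows "\<exists>x y. u = f x \<and> w = f y \<and> A = {x, y}"
proof -
  from assms(2) obtain x where x: "x \<in> A" "u = f x" by (metis imageE insertI1)
  from assms(2) obtain y where y: "y \<in> A" "w = f y" by (metis imageE insertI1 insert_commute)
  have "A = {x, y}"
  proof
    show "A \<subseteq> {x, y}"
    proof
      fix z assume "z \<in> A"
      then have "f z \<in> {f x, f y}" using assms(2) x y by auto
      then show "z \<in> {x, y}" using assms(1) by (auto dest: injD)
    qed
    show "{x, y} \<subseteq> A" using x y by auto
  qed
  then show ?thesis using x y by blast
qed

lemma sum_split_set: "F = Inl ` (Inl -` F) \<union> Inr ` (Inr -` F)"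
  apply (rule set_eqI)
  subgoal for x by (cases x) auto
  done

locale glue_setup =
  fixes V1 :: "'a set" and ends1 :: "'c \<Rightarrow> 'a set" and ms1 :: "'a list"
    and V2 :: "'b set" and ends2 :: "'d \<Rightarrow> 'b set" and ms2 :: "'b list"
    and g :: nat
  assumes d1: "distinct ms1" and d2: "distinct ms2"
    and s1: "set ms1 \<subseteq> V1" and s2: "set ms2 \<subseteq> V2"
    and g1: "1 \<le> g" and gl1: "g \<le> length ms1" and gl2: "g \<le> length ms2"
    and l1: "length ms1 \<le> 2"
begin

abbreviation "f2 \<equiv> glue_map g ms1 ms2"
abbreviation "eL \<equiv> glue_ends g ends1 ms1 ends2 ms2"
abbreviation "lift F1 F2 \<equiv> Inl ` F1 \<union> Inr ` F2"
abbreviation "sep1 F1 \<equiv> \<forall>i<g. \<forall>j<g. reach ends1 F1 (ms1!i) (ms1!j) \<longrightarrow> i = j"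
abbreviation "sep2 F2 \<equiv> \<forall>i<g. \<forall>j<g. reach ends2 F2 (ms2!i) (ms2!j) \<longrightarrow> i = j"

lemma g_le2: "g \<le> 2" using gl1 l1 by simp

lemma lt_g: "i < g \<Longrightarrow> i = 0 \<or> (i = 1 \<and> 2 \<le> g)"
  using g1 g_le2 by auto

lemma ms1_ne: "2 \<le> g \<Longrightarrow> ms1 ! 0 \<noteq> ms1 ! 1"
proof -
  assume "2 \<le> g" then have "1 < length ms1" using gl1 by simp
  then show ?thesis using nth_eq_iff_index_eq[OF d1, of 0 1] by (cases ms1) auto
qed
lemma ms2_ne: "2 \<le> g \<Longrightarrow> ms2 ! 0 \<noteq> ms2 ! 1"
proof -
  assume "2 \<le> g" then have "1 < length ms2" using gl2 by simp
  then show ?thesis using nth_eq_iff_index_eq[OF d2, of 0 1] by (cases ms2) auto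
qed

lemma key: "Inl z = f2 p \<longleftrightarrow> (\<exists>i<g. z = ms1!i \<and> p = ms2!i)"
proof -
  have "(\<exists>i<g. z = ms1!i \<and> p = ms2!i) \<longleftrightarrow>
     (z = ms1!0 \<and> p = ms2!0) \<or> (2 \<le> g \<and> z = ms1!1 \<and> p = ms2!1)"
  proof
    assume "\<exists>i<g. z = ms1!i \<and> p = ms2!i"
    then obtain i where "i < g" "z = ms1!i" "p = ms2!i" by blast
    then show "(z = ms1!0 \<and> p = ms2!0) \<or> (2 \<le> g \<and> z = ms1!1 \<and> p = ms2!1)"
      using lt_g[of i] by auto
  next
    assume "(z = ms1!0 \<and> p = ms2!0) \<or> (2 \<le> g \<and> z = ms1!1 \<and> p = ms2!1)"
    then show "\<exists>i<g. z = ms1!i \<and> p = ms2!i"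
    proof
      assume "z = ms1!0 \<and> p = ms2!0" then show ?thesis using g1 by (intro exI[of _ 0]) auto
    next
      assume "2 \<le> g \<and> z = ms1!1 \<and> p = ms2!1" then show ?thesis by (intro exI[of _ 1]) auto
    qed
  qed
  moreover have "Inl z = f2 p \<longleftrightarrow>
     (z = ms1!0 \<and> p = ms2!0) \<or> (2 \<le> g \<and> z = ms1!1 \<and> p = ms2!1)"
  proof (cases "p = ms2!0")
    case True then show ?thesis using g1 ms2_ne unfolding glue_map_def by auto
  next
    case False then show ?thesis unfolding glue_map_def by simp
  qed
  ultimately show ?thesis by (simp only:)
qed

lemma inj_f2: "inj f2"
proof (rule injI)
  fix x y assume "f2 x = f2 y"
  then show "x = y" using ms1_ne unfolding glue_map_def
    by (simp split: if_splits)
qed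

lemma in1: "i < g \<Longrightarrow> ms1 ! i \<in> set ms1" using gl1 by simp
lemma in2: "i < g \<Longrightarrow> ms2 ! i \<in> set ms2" using gl2 by simp

lemma adj_glue:
  "adj eL (lift F1 F2) u w \<longleftrightarrow>
    (\<exists>x y. u = Inl x \<and> w = Inl y \<and> adj ends1 F1 x y) \<or>
    (\<exists>x y. u = f2 x \<and> w = f2 y \<and> adj ends2 F2 x y)"
proof
  assume "adj eL (lift F1 F2) u w"
  then obtain e where e: "e \<in> lift F1 F2" "eL e = {u, w}" unfolding adj_def by blast
  show "(\<exists>x y. u = Inl x \<and> w = Inl y \<and> adj ends1 F1 x y) \<or>
    (\<exists>x y. u = f2 x \<and> w = f2 y \<and> adj ends2 F2 x y)"
  proof (cases e)
    case (Inl e1)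
    with e have h: "e1 \<in> F1" "Inl ` ends1 e1 = {u, w}" by (auto simp: glue_ends_def)
    obtain x y where "u = Inl x" "w = Inl y" "ends1 e1 = {x, y}"
      using img_pair[of Inl "ends1 e1" u w] h(2) by auto
    moreover have "adj ends1 F1 x y" unfolding adj_def using h(1) calculation(3) by blast
    ultimately show ?thesis by blast
  next
    case (Inr e2)
    with e have h: "e2 \<in> F2" "f2 ` ends2 e2 = {u, w}" by (auto simp: glue_ends_def)
    obtain x y where "u = f2 x" "w = f2 y" "ends2 e2 = {x, y}"
      using img_pair[OF inj_f2 h(2)] by blast
    moreover have "adj ends2 F2 x y" unfolding adj_def using h(1) calculation(3) by blast
    ultimately show ?thesis by blast
  qed
next
  assume "(\<exists>x y. u = Inl x \<and> w = Inl y \<and> adj ends1 F1 x y) \<or>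
    (\<exists>x y. u = f2 x \<and> w = f2 y \<and> adj ends2 F2 x y)"
  then show "adj eL (lift F1 F2) u w"
  proof (elim disjE exE conjE)
    fix x y assume "u = Inl x" "w = Inl y" "adj ends1 F1 x y"
    then obtain e where "e \<in> F1" "ends1 e = {x, y}" unfolding adj_def by blast
    then have "Inl e \<in> lift F1 F2" "eL (Inl e) = {u, w}"
      using \<open>u = Inl x\<close> \<open>w = Inl y\<close> by (simp_all add: glue_ends_def)
    then show ?thesis unfolding adj_def by blast
  next
    fix x y assume "u = f2 x" "w = f2 y" "adj ends2 F2 x y"
    then obtain e where "e \<in> F2" "ends2 e = {x, y}" unfolding adj_def by blast
    then have "Inr e \<in> lift F1 F2" "eL (Inr e) = {u, w}"
      using \<open>u = f2 x\<close> \<open>w = f2 y\<close> by (simp_all add: glue_ends_def)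
    then show ?thesis unfolding adj_def by blast
  qed
qed

lemma lift1: "reach ends1 F1 x y \<Longrightarrow> reach eL (lift F1 F2) (Inl x) (Inl y)"
proof -
  assume "reach ends1 F1 x y"
  then have "(adj ends1 F1)\<^sup>*\<^sup>* x y" by (simp add: reach_def)
  then show ?thesis
  proof (induction rule: rtranclp_induct)
    case base then show ?case by (rule reach_refl)
  next
    case (step y z)
    have "adj eL (lift F1 F2) (Inl y) (Inl z)" unfolding adj_glue using step(2) by blast
    then show ?case by (rule reach_step[OF step.IH])
  qed
qed

lemma lift2: "reach ends2 F2 x y \<Longrightarrow> reach eL (lift F1 F2) (f2 x) (f2 y)"
proof -
  assume "reach ends2 F2 x y"
  then have "(adj ends2 F2)\<^sup>*\<^sup>* x y" by (simp add: reach_def)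
  then show ?thesis
  proof (induction rule: rtranclp_induct)
    case base then show ?case by (rule reach_refl)
  next
    case (step y z)
    have "adj eL (lift F1 F2) (f2 y) (f2 z)" unfolding adj_glue using step(2) by blast
    then show ?case by (rule reach_step[OF step.IH])
  qed
qed

end


context glue_setup
begin

lemma sepD2: "sep2 F2 \<Longrightarrow> i < g \<Longrightarrow> j < g \<Longrightarrow> reach ends2 F2 (ms2!i) (ms2!j) \<Longrightarrow> i = j"
  by blast
lemma sepD1: "sep1 F1 \<Longrightarrow> i < g \<Longrightarrow> j < g \<Longrightarrow> reach ends1 F1 (ms1!i) (ms1!j) \<Longrightarrow> i = j"
  by blast

lemma keyE: assumes "Inl z = f2 p" obtains j where "j < g" "z = ms1!j" "p = ms2!j"
  using key[THEN iffD1, OF assms] by blast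

lemma adj_glueE:
  assumes "adj eL (lift F1 F2) y w'"
  obtains (A) p q where "y = Inl p" "w' = Inl q" "adj ends1 F1 p q"
      | (B) p q where "y = f2 p" "w' = f2 q" "adj ends2 F2 p q"
  using adj_glue[THEN iffD1, OF assms] by blast

lemma REACH1:
  assumes sep: "sep2 F2" and r: "reach eL (lift F1 F2) (Inl x) w"
  shows "(\<exists>z. w = Inl z \<and> reach ends1 F1 x z) \<or>
         (\<exists>z i. i < g \<and> w = f2 z \<and> reach ends1 F1 x (ms1!i) \<and> reach ends2 F2 (ms2!i) z)"
proof -
  have "(adj eL (lift F1 F2))\<^sup>*\<^sup>* (Inl x) w" using r by (simp add: reach_def)
  then show ?thesis
  proof (induction rule: rtranclp_induct)
    case base show ?case by (intro disjI1 exI[of _ x] conjI refl reach_refl)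
  next
    case (step y w')
    from step.hyps(2) show ?case
    proof (cases rule: adj_glueE)
      case (A p q)
      from step.IH show ?thesis
      proof (elim disjE exE conjE)
        fix z assume "y = Inl z" "reach ends1 F1 x z"
        then have "reach ends1 F1 x q" using A(1,3) reach_step[of ends1 F1 x p q] by simp
        then show ?thesis using A(2) by blast
      next
        fix z i assume h: "i < g" "y = f2 z" "reach ends1 F1 x (ms1!i)" "reach ends2 F2 (ms2!i) z"
        then have "Inl p = f2 z" using A by simp
        then obtain j where j: "j < g" "p = ms1!j" "z = ms2!j" by (rule keyE)
        have "i = j" using sepD2[OF sep h(1) j(1)] h(4) j(3) by simp
        then have "reach ends1 F1 x p" using h(3) j(2) by simp
        then have "reach ends1 F1 x q" using A(3) reach_step by metis
        then show ?thesis using A(2) by blast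
      qed
    next
      case (B p q)
      from step.IH show ?thesis
      proof (elim disjE exE conjE)
        fix z assume h: "y = Inl z" "reach ends1 F1 x z"
        then have "Inl z = f2 p" using B by simp
        then obtain j where j: "j < g" "z = ms1!j" "p = ms2!j" by (rule keyE)
        have "reach ends2 F2 (ms2!j) q" using reach_step[OF reach_refl, of ends2 F2 p q] B(3) j(3) by simp
        moreover have "reach ends1 F1 x (ms1!j)" using h(2) j(2) by simp
        ultimately show ?thesis using B(2) j(1) by blast
      next
        fix z i assume h: "i < g" "y = f2 z" "reach ends1 F1 x (ms1!i)" "reach ends2 F2 (ms2!i) z"
        then have "z = p" using B(1) inj_f2 by (auto dest: injD)
        then have "reach ends2 F2 (ms2!i) q" using h(4) B(3) reach_step by metis
        then show ?thesis using B(2) h(1,3) by blast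
      qed
    qed
  qed
qed

lemma REACH2:
  assumes sep: "sep1 F1" and r: "reach eL (lift F1 F2) (f2 x) w"
  shows "(\<exists>z. w = f2 z \<and> reach ends2 F2 x z) \<or>
         (\<exists>z i. i < g \<and> w = Inl z \<and> reach ends2 F2 x (ms2!i) \<and> reach ends1 F1 (ms1!i) z)"
proof -
  have "(adj eL (lift F1 F2))\<^sup>*\<^sup>* (f2 x) w" using r by (simp add: reach_def)
  then show ?thesis
  proof (induction rule: rtranclp_induct)
    case base show ?case by (intro disjI1 exI[of _ x] conjI refl reach_refl)
  next
    case (step y w')
    from step.hyps(2) show ?case
    proof (cases rule: adj_glueE)
      case (A p q)
      from step.IH show ?thesis
      proof (elim disjE exE conjE)
        fix z assume h: "y = f2 z" "reach ends2 F2 x z"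
        then have "Inl p = f2 z" using A by simp
        then obtain j where j: "j < g" "p = ms1!j" "z = ms2!j" by (rule keyE)
        have "reach ends1 F1 (ms1!j) q" using reach_step[OF reach_refl, of ends1 F1 p q] A(3) j(2) by simp
        moreover have "reach ends2 F2 x (ms2!j)" using h(2) j(3) by simp
        ultimately show ?thesis using A(2) j(1) by blast
      next
        fix z i assume h: "i < g" "y = Inl z" "reach ends2 F2 x (ms2!i)" "reach ends1 F1 (ms1!i) z"
        then have "z = p" using A(1) by simp
        then have "reach ends1 F1 (ms1!i) q" using h(4) A(3) reach_step by metis
        then show ?thesis using A(2) h(1,3) by blast
      qed
    next
      case (B p q)
      from step.IH show ?thesis
      proof (elim disjE exE conjE)
        fix z assume h: "y = f2 z" "reach ends2 F2 x z"
        then have "z = p" using B(1) inj_f2 by (auto dest: injD)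
        then have "reach ends2 F2 x q" using h(2) B(3) reach_step by metis
        then show ?thesis using B(2) by blast
      next
        fix z i assume h: "i < g" "y = Inl z" "reach ends2 F2 x (ms2!i)" "reach ends1 F1 (ms1!i) z"
        then have "Inl z = f2 p" using B by simp
        then obtain j where j: "j < g" "z = ms1!j" "p = ms2!j" by (rule keyE)
        have "i = j" using sepD1[OF sep h(1) j(1)] h(4) j(2) by simp
        then have "reach ends2 F2 x p" using h(3) j(3) by simp
        then have "reach ends2 F2 x q" using B(3) reach_step by metis
        then show ?thesis using B(2) by blast
      qed
    qed
  qed
qed

end


context glue_setup
begin

lemma setM: "set (glue_ms g ms1 ms2) = Inl ` set ms1 \<union> f2 ` set ms2"
  by (simp add: glue_ms_def)
lemma setV: "glue_V g V1 ms1 V2 ms2 = Inl ` V1 \<union> f2 ` V2"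
  by (simp add: glue_V_def)

lemma keyI: "i < g \<Longrightarrow> Inl (ms1!i) = f2 (ms2!i)"
  using key[THEN iffD2] by blast

lemma memM1: assumes "Inl z \<in> Inl ` set ms1 \<union> f2 ` set ms2" shows "z \<in> set ms1"
proof -
  from assms have "Inl z \<in> Inl ` set ms1 \<or> (\<exists>p. Inl z = f2 p)" by blast
  then show ?thesis
  proof (elim disjE exE)
    assume "Inl z \<in> Inl ` set ms1" then show ?thesis by auto
  next
    fix p assume "Inl z = f2 p"
    then obtain j where "j < g" "z = ms1!j" by (rule keyE)
    then show ?thesis using in1 by simp
  qed
qed

lemma memM2: assumes "f2 z \<in> Inl ` set ms1 \<union> f2 ` set ms2" shows "z \<in> set ms2"
proof -
  from assms consider m where "f2 z = Inl m" | p where "p \<in> set ms2" "f2 z = f2 p" by blast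
  then show ?thesis
  proof cases
    case 1
    then have "Inl m = f2 z" by simp
    then obtain j where "j < g" "z = ms2!j" by (rule keyE)
    then show ?thesis using in2 by simp
  next
    case 2
    then have "z = p" using inj_f2 by (simp add: inj_eq)
    then show ?thesis using 2 by simp
  qed
qed

lemma idx1: "i < g \<Longrightarrow> j < g \<Longrightarrow> ms1!i = ms1!j \<Longrightarrow> i = j"
  using nth_eq_iff_index_eq[OF d1, of i j] gl1 by simp
lemma idx2: "i < g \<Longrightarrow> j < g \<Longrightarrow> ms2!i = ms2!j \<Longrightarrow> i = j"
  using nth_eq_iff_index_eq[OF d2, of i j] gl2 by simp

lemma seg_sep1:
  assumes S: "segmental_forest V1 E1 ends1 ms1 F1" shows "sep1 F1"
proof (intro allI impI)
  fix i j assume ij: "i < g" "j < g" and r: "reach ends1 F1 (ms1!i) (ms1!j)"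
  have "ms1!i \<in> V1" using in1[OF ij(1)] s1 by blast
  then have "ms1!i = ms1!j" using seg_uniq[OF S _ in1[OF ij(1)] in1[OF ij(2)] reach_refl r] by simp
  then show "i = j" using idx1 ij by simp
qed

lemma seg_sep2:
  assumes S: "segmental_forest V2 E2 ends2 ms2 F2" shows "sep2 F2"
proof (intro allI impI)
  fix i j assume ij: "i < g" "j < g" and r: "reach ends2 F2 (ms2!i) (ms2!j)"
  have "ms2!i \<in> V2" using in2[OF ij(1)] s2 by blast
  then have "ms2!i = ms2!j" using seg_uniq[OF S _ in2[OF ij(1)] in2[OF ij(2)] reach_refl r] by simp
  then show "i = j" using idx2 ij by simp
qed

abbreviation "segL E1 E2 F \<equiv> segmental_forest (glue_V g V1 ms1 V2 ms2) (glue_E E1 E2) eL (glue_ms g ms1 ms2) F"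

lemma sepL:
  assumes L: "segL E1 E2 (lift F1 F2)" shows "sep1 F1" "sep2 F2"
proof (intro allI impI)
  fix i j assume ij: "i < g" "j < g" and r: "reach ends1 F1 (ms1!i) (ms1!j)"
  have "Inl (ms1!i) \<in> glue_V g V1 ms1 V2 ms2" using in1[OF ij(1)] s1 unfolding setV by blast
  moreover have "Inl (ms1!i) \<in> set (glue_ms g ms1 ms2)" "Inl (ms1!j) \<in> set (glue_ms g ms1 ms2)"
    unfolding setM using in1 ij by auto
  ultimately have "Inl (ms1!i) = (Inl (ms1!j) :: 'a + 'b)"
    using seg_uniq[OF L _ _ _ reach_refl lift1[OF r]] by blast
  then show "i = j" using idx1 ij by simp
next
  show "sep2 F2"
  proof (intro allI impI)
  fix i j assume ij: "i < g" "j < g" and r: "reach ends2 F2 (ms2!i) (ms2!j)"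
  have "f2 (ms2!i) \<in> glue_V g V1 ms1 V2 ms2" using in2[OF ij(1)] s2 unfolding setV by blast
  moreover have "f2 (ms2!i) \<in> set (glue_ms g ms1 ms2)" "f2 (ms2!j) \<in> set (glue_ms g ms1 ms2)"
    unfolding setM using in2 ij by auto
  ultimately have "f2 (ms2!i) = f2 (ms2!j)"
    using seg_uniq[OF L _ _ _ reach_refl lift2[OF r]] by blast
  then have "ms2!i = ms2!j" using inj_f2 by (simp add: inj_eq)
  then show "i = j" using idx2 ij by simp
  qed
qed

lemma diff1: "lift F1 F2 - {Inl e} = lift (F1 - {e}) F2" by auto
lemma diff2: "lift F1 F2 - {Inr e} = lift F1 (F2 - {e})" by auto

lemma forest_back:
  assumes f1: "forest ends1 F1" and f2: "forest ends2 F2" and sp1: "sep1 F1" and sp2: "sep2 F2"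
  shows "forest eL (lift F1 F2)"
  unfolding forest_def
proof (intro ballI allI impI notI)
  fix e u w
  assume e: "e \<in> lift F1 F2" and ew: "eL e = {u, w}" and r: "reach eL (lift F1 F2 - {e}) u w"
  show False
  proof (cases e)
    case (Inl e1)
    with e ew have h: "e1 \<in> F1" "Inl ` ends1 e1 = {u, w}" by (auto simp: glue_ends_def)
    obtain x y where xy: "u = Inl x" "w = Inl y" "ends1 e1 = {x, y}"
      using img_pair[of Inl "ends1 e1" u w] h(2) by auto
    have r': "reach eL (lift (F1 - {e1}) F2) (Inl x) (Inl y)" using r xy Inl by (simp add: diff1)
    have "reach ends1 (F1 - {e1}) x y"
      using REACH1[OF sp2 r']
    proof (elim disjE exE conjE)
      fix z assume "Inl y = Inl z" "reach ends1 (F1 - {e1}) x z"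
      then show ?thesis by simp
    next
      fix z i assume hh: "i < g" "Inl y = f2 z" "reach ends1 (F1 - {e1}) x (ms1!i)"
        "reach ends2 F2 (ms2!i) z"
      obtain j where j: "j < g" "y = ms1!j" "z = ms2!j" using hh(2) by (rule keyE)
      have "i = j" using sepD2[OF sp2 hh(1) j(1)] hh(4) j(3) by simp
      then show ?thesis using hh(3) j(2) by simp
    qed
    then show False using f1 h(1) xy(3) unfolding forest_def by blast
  next
    case (Inr e2)
    with e ew have h: "e2 \<in> F2" "f2 ` ends2 e2 = {u, w}" by (auto simp: glue_ends_def)
    obtain x y where xy: "u = f2 x" "w = f2 y" "ends2 e2 = {x, y}"
      using img_pair[OF inj_f2 h(2)] by blast
    have r': "reach eL (lift F1 (F2 - {e2})) (f2 x) (f2 y)" using r xy Inr by (simp add: diff2)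
    have "reach ends2 (F2 - {e2}) x y"
      using REACH2[OF sp1 r']
    proof (elim disjE exE conjE)
      fix z assume "f2 y = f2 z" "reach ends2 (F2 - {e2}) x z"
      then show ?thesis using inj_f2 by (simp add: inj_eq)
    next
      fix z i assume hh: "i < g" "f2 y = Inl z" "reach ends2 (F2 - {e2}) x (ms2!i)"
        "reach ends1 F1 (ms1!i) z"
      have "Inl z = f2 y" using hh(2) by simp
      then obtain j where j: "j < g" "z = ms1!j" "y = ms2!j" by (rule keyE)
      have "i = j" using sepD1[OF sp1 hh(1) j(1)] hh(4) j(2) by simp
      then show ?thesis using hh(3) j(3) by simp
    qed
    then show False using f2 h(1) xy(3) unfolding forest_def by blast
  qed
qed

lemma forest_fwd:
  assumes fL: "forest eL (lift F1 F2)"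
  shows "forest ends1 F1" "forest ends2 F2"
proof -
  show "forest ends1 F1" unfolding forest_def
  proof (intro ballI allI impI notI)
    fix e x y assume e: "e \<in> F1" "ends1 e = {x, y}" and r: "reach ends1 (F1 - {e}) x y"
    have "reach eL (lift F1 F2 - {Inl e}) (Inl x) (Inl y)" unfolding diff1 by (rule lift1[OF r])
    moreover have "eL (Inl e) = {Inl x, Inl y}" using e by (simp add: glue_ends_def)
    moreover have "Inl e \<in> lift F1 F2" using e by simp
    ultimately show False using fL unfolding forest_def by blast
  qed
  show "forest ends2 F2" unfolding forest_def
  proof (intro ballI allI impI notI)
    fix e x y assume e: "e \<in> F2" "ends2 e = {x, y}" and r: "reach ends2 (F2 - {e}) x y"
    have "reach eL (lift F1 F2 - {Inr e}) (f2 x) (f2 y)" unfolding diff2 by (rule lift2[OF r])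
    moreover have "eL (Inr e) = {f2 x, f2 y}" using e by (simp add: glue_ends_def)
    moreover have "Inr e \<in> lift F1 F2" using e by simp
    ultimately show False using fL unfolding forest_def by blast
  qed
qed

end


context glue_setup
begin

lemma main:
  "segL E1 E2 (lift F1 F2) \<longleftrightarrow>
   segmental_forest V1 E1 ends1 ms1 F1 \<and> segmental_forest V2 E2 ends2 ms2 F2"
proof
  assume L: "segL E1 E2 (lift F1 F2)"
  have sp1: "sep1 F1" and sp2: "sep2 F2" using sepL[OF L] by blast+
  have sub: "lift F1 F2 \<subseteq> lift E1 E2" using L unfolding segmental_forest_def glue_E_def by blast
  then have sub1: "F1 \<subseteq> E1" and sub2: "F2 \<subseteq> E2" by auto
  have fL: "forest eL (lift F1 F2)" using L unfolding segmental_forest_def by blast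
  have mL: "\<forall>u\<in>glue_V g V1 ms1 V2 ms2. \<exists>!m. m \<in> set (glue_ms g ms1 ms2) \<and> reach eL (lift F1 F2) u m"
    using L unfolding segmental_forest_def by blast
  have m1: "\<exists>!m. m \<in> set ms1 \<and> reach ends1 F1 x m" if x: "x \<in> V1" for x
  proof -
    have xL: "Inl x \<in> glue_V g V1 ms1 V2 ms2" using x unfolding setV by blast
    then obtain m where m: "m \<in> set (glue_ms g ms1 ms2)" "reach eL (lift F1 F2) (Inl x) m"
      using mL by blast
    have ex: "\<exists>m1. m1 \<in> set ms1 \<and> reach ends1 F1 x m1"
      using REACH1[OF sp2 m(2)]
    proof (elim disjE exE conjE)
      fix z assume "m = Inl z" "reach ends1 F1 x z"
      moreover then have "z \<in> set ms1" using m(1) memM1 unfolding setM by blast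
      ultimately show ?thesis by blast
    next
      fix z i assume "i < g" "reach ends1 F1 x (ms1!i)"
      then show ?thesis using in1 by blast
    qed
    have un: "a = b" if "a \<in> set ms1" "reach ends1 F1 x a" "b \<in> set ms1" "reach ends1 F1 x b" for a b
    proof -
      have "Inl a \<in> set (glue_ms g ms1 ms2)" "Inl b \<in> set (glue_ms g ms1 ms2)"
        using that unfolding setM by auto
      then have "(Inl a :: 'a + 'b) = Inl b"
        using seg_uniq[OF L xL _ _ lift1[OF that(2)] lift1[OF that(4)]] by blast
      then show ?thesis by simp
    qed
    show ?thesis using ex un by blast
  qed
  have m2: "\<exists>!m. m \<in> set ms2 \<and> reach ends2 F2 x m" if x: "x \<in> V2" for x
  proof -
    have xL: "f2 x \<in> glue_V g V1 ms1 V2 ms2" using x unfolding setV by blast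
    then obtain m where m: "m \<in> set (glue_ms g ms1 ms2)" "reach eL (lift F1 F2) (f2 x) m"
      using mL by blast
    have ex: "\<exists>m2. m2 \<in> set ms2 \<and> reach ends2 F2 x m2"
      using REACH2[OF sp1 m(2)]
    proof (elim disjE exE conjE)
      fix z assume "m = f2 z" "reach ends2 F2 x z"
      moreover then have "z \<in> set ms2" using m(1) memM2 unfolding setM by blast
      ultimately show ?thesis by blast
    next
      fix z i assume "i < g" "reach ends2 F2 x (ms2!i)"
      then show ?thesis using in2 by blast
    qed
    have un: "a = b" if "a \<in> set ms2" "reach ends2 F2 x a" "b \<in> set ms2" "reach ends2 F2 x b" for a b
    proof -
      have "f2 a \<in> set (glue_ms g ms1 ms2)" "f2 b \<in> set (glue_ms g ms1 ms2)"
        using that unfolding setM by auto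
      then have "f2 a = f2 b"
        using seg_uniq[OF L xL _ _ lift2[OF that(2)] lift2[OF that(4)]] by blast
      then show ?thesis using inj_f2 by (simp add: inj_eq)
    qed
    show ?thesis using ex un by blast
  qed
  show "segmental_forest V1 E1 ends1 ms1 F1 \<and> segmental_forest V2 E2 ends2 ms2 F2"
    unfolding segmental_forest_def using sub1 sub2 forest_fwd[OF fL] m1 m2 by blast
next
  assume "segmental_forest V1 E1 ends1 ms1 F1 \<and> segmental_forest V2 E2 ends2 ms2 F2"
  then have S1: "segmental_forest V1 E1 ends1 ms1 F1" and S2: "segmental_forest V2 E2 ends2 ms2 F2"
    by blast+
  have sp1: "sep1 F1" using seg_sep1[OF S1] .
  have sp2: "sep2 F2" using seg_sep2[OF S2] .
  have fo: "forest eL (lift F1 F2)"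
    using forest_back[OF _ _ sp1 sp2] S1 S2 unfolding segmental_forest_def by blast
  have sub: "lift F1 F2 \<subseteq> glue_E E1 E2"
    using S1 S2 unfolding segmental_forest_def glue_E_def by blast
  have mk: "\<exists>!m. m \<in> set (glue_ms g ms1 ms2) \<and> reach eL (lift F1 F2) u m"
    if u: "u \<in> glue_V g V1 ms1 V2 ms2" for u
  proof -
    from u have "(\<exists>x. x \<in> V1 \<and> u = Inl x) \<or> (\<exists>x. x \<in> V2 \<and> u = f2 x)"
      unfolding setV by blast
    then show ?thesis
    proof (elim disjE exE conjE)
      fix x assume x: "x \<in> V1" "u = Inl x"
      then obtain m1 where m1: "m1 \<in> set ms1" "reach ends1 F1 x m1"
        using S1 unfolding segmental_forest_def by blast
      have uq: "a = m1" if "a \<in> set ms1" "reach ends1 F1 x a" for a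
        using seg_uniq[OF S1 x(1) that(1) m1(1) that(2) m1(2)] .
      show ?thesis
      proof (rule ex1I[of _ "Inl m1"])
        show "Inl m1 \<in> set (glue_ms g ms1 ms2) \<and> reach eL (lift F1 F2) u (Inl m1)"
          using m1 x(2) lift1[OF m1(2)] unfolding setM by blast
      next
        fix m assume m: "m \<in> set (glue_ms g ms1 ms2) \<and> reach eL (lift F1 F2) u m"
        then have mM: "m \<in> Inl ` set ms1 \<union> f2 ` set ms2" and r: "reach eL (lift F1 F2) (Inl x) m"
          using x(2) unfolding setM by blast+
        show "m = Inl m1"
          using REACH1[OF sp2 r]
        proof (elim disjE exE conjE)
          fix z assume z: "m = Inl z" "reach ends1 F1 x z"
          then have "z \<in> set ms1" using mM memM1 by blast
          then show ?thesis using uq z by blast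
        next
          fix z i assume h: "i < g" "m = f2 z" "reach ends1 F1 x (ms1!i)" "reach ends2 F2 (ms2!i) z"
          have "ms1!i = m1" using uq in1[OF h(1)] h(3) by blast
          have "z \<in> set ms2" using memM2[of z] mM h(2) by simp
          moreover have "ms2!i \<in> V2" using in2[OF h(1)] s2 by blast
          ultimately have "ms2!i = z"
            using seg_uniq[OF S2 _ in2[OF h(1)] _ reach_refl h(4)] by blast
          then show ?thesis using h(2) keyI[OF h(1)] \<open>ms1!i = m1\<close> by simp
        qed
      qed
    next
      fix x assume x: "x \<in> V2" "u = f2 x"
      then obtain m2 where m2: "m2 \<in> set ms2" "reach ends2 F2 x m2"
        using S2 unfolding segmental_forest_def by blast
      have uq: "a = m2" if "a \<in> set ms2" "reach ends2 F2 x a" for a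
        using seg_uniq[OF S2 x(1) that(1) m2(1) that(2) m2(2)] .
      show ?thesis
      proof (rule ex1I[of _ "f2 m2"])
        show "f2 m2 \<in> set (glue_ms g ms1 ms2) \<and> reach eL (lift F1 F2) u (f2 m2)"
          using m2 x(2) lift2[OF m2(2)] unfolding setM by blast
      next
        fix m assume m: "m \<in> set (glue_ms g ms1 ms2) \<and> reach eL (lift F1 F2) u m"
        then have mM: "m \<in> Inl ` set ms1 \<union> f2 ` set ms2" and r: "reach eL (lift F1 F2) (f2 x) m"
          using x(2) unfolding setM by blast+
        show "m = f2 m2"
          using REACH2[OF sp1 r]
        proof (elim disjE exE conjE)
          fix z assume z: "m = f2 z" "reach ends2 F2 x z"
          then have "z \<in> set ms2" using mM memM2 by blast
          then show ?thesis using uq z by blast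
        next
          fix z i assume h: "i < g" "m = Inl z" "reach ends2 F2 x (ms2!i)" "reach ends1 F1 (ms1!i) z"
          have "ms2!i = m2" using uq in2[OF h(1)] h(3) by blast
          have "z \<in> set ms1" using memM1[of z] mM h(2) by simp
          moreover have "ms1!i \<in> V1" using in1[OF h(1)] s1 by blast
          ultimately have "ms1!i = z"
            using seg_uniq[OF S1 _ in1[OF h(1)] _ reach_refl h(4)] by blast
          then show ?thesis using h(2) keyI[OF h(1)] \<open>ms2!i = m2\<close> by simp
        qed
      qed
    qed
  qed
  show "segL E1 E2 (lift F1 F2)"
    unfolding segmental_forest_def using sub fo mk by blast
qed

end

lemma vimage_lift1: "Inl -` (Inl ` A \<union> Inr ` B) = A" by auto
lemma vimage_lift2: "Inr -` (Inl ` A \<union> Inr ` B) = B" by auto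

theorem proposition5p5:
  fixes V1 :: "'a set" and E1 :: "'c set" and ends1 :: "'c \<Rightarrow> 'a set" and ms1 :: "'a list"
    and V2 :: "'b set" and E2 :: "'d set" and ends2 :: "'d \<Rightarrow> 'b set" and ms2 :: "'b list"
    and g :: nat
  assumes G1: "fin_graph V1 E1 ends1" "connected_graph V1 E1 ends1"
      and M1: "distinct ms1" "set ms1 \<subseteq> V1" "length ms1 \<in> {1, 2}"
      and G2: "fin_graph V2 E2 ends2" "connected_graph V2 E2 ends2"
      and M2: "distinct ms2" "set ms2 \<subseteq> V2" "length ms2 \<in> {1, 2}"
      and g: "1 \<le> g" "g \<le> min (length ms1) (length ms2)"
      and t: "length ms1 + length ms2 - g \<le> 2"
  shows "F_count (glue_V g V1 ms1 V2 ms2) (glue_E E1 E2) (glue_ends g ends1 ms1 ends2 ms2)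
           (glue_ms g ms1 ms2)
         = F_count V1 E1 ends1 ms1 * F_count V2 E2 ends2 ms2"
proof -
  interpret glue_setup V1 ends1 ms1 V2 ends2 ms2 g
    by (unfold_locales) (use M1 M2 g in auto)
  define \<Phi> where "\<Phi> = (\<lambda>(A :: 'c set, B :: 'd set). Inl ` A \<union> Inr ` B)"
  define S1 where "S1 = {F1. segmental_forest V1 E1 ends1 ms1 F1}"
  define S2 where "S2 = {F2. segmental_forest V2 E2 ends2 ms2 F2}"
  have eq: "{F. segL E1 E2 F} = \<Phi> ` (S1 \<times> S2)"
  proof
    show "{F. segL E1 E2 F} \<subseteq> \<Phi> ` (S1 \<times> S2)"
    proof
      fix F assume "F \<in> {F. segL E1 E2 F}"
      then have L: "segL E1 E2 F" by simp
      have Fe: "F = lift (Inl -` F) (Inr -` F)" by (rule sum_split_set)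
      then have "segL E1 E2 (lift (Inl -` F) (Inr -` F))" using L by simp
      then have "(Inl -` F, Inr -` F) \<in> S1 \<times> S2" unfolding main S1_def S2_def by simp
      moreover have "F = \<Phi> (Inl -` F, Inr -` F)" unfolding \<Phi>_def using Fe by simp
      ultimately show "F \<in> \<Phi> ` (S1 \<times> S2)" by blast
    qed
    show "\<Phi> ` (S1 \<times> S2) \<subseteq> {F. segL E1 E2 F}"
    proof
      fix F assume "F \<in> \<Phi> ` (S1 \<times> S2)"
      then obtain A B where AB: "A \<in> S1" "B \<in> S2" "F = lift A B" unfolding \<Phi>_def by blast
      then have "segL E1 E2 (lift A B)" unfolding main S1_def S2_def by simp
      then show "F \<in> {F. segL E1 E2 F}" using AB(3) by simp
    qed
  qed
  have inj: "inj_on \<Phi> (S1 \<times> S2)"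
  proof (rule inj_onI)
    fix p q assume "p \<in> S1 \<times> S2" "q \<in> S1 \<times> S2" "\<Phi> p = \<Phi> q"
    then obtain A B A' B' where "p = (A, B)" "q = (A', B')" "lift A B = lift A' B'"
      unfolding \<Phi>_def by (cases p, cases q) auto
    moreover then have "A = A'" "B = B'"
      using vimage_lift1[of A B] vimage_lift1[of A' B'] vimage_lift2[of A B] vimage_lift2[of A' B']
      by metis+
    ultimately show "p = q" by simp
  qed
  have "F_count (glue_V g V1 ms1 V2 ms2) (glue_E E1 E2) (glue_ends g ends1 ms1 ends2 ms2)
           (glue_ms g ms1 ms2) = card (\<Phi> ` (S1 \<times> S2))"
    unfolding F_count_def eq ..
  also have "\<dots> = card (S1 \<times> S2)" by (rule card_image[OF inj])
  also have "\<dots> = card S1 * card S2" by (rule card_cartesian_product)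
  finally show ?thesis unfolding F_count_def S1_def S2_def .
qed

end
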